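(* Let $\alpha,\beta\in R$ with $\beta$ a long root and $(\alpha,\beta)=0$. Then there exist $\gamma,\gamma'\in R$ with $\gamma\notin\{\alpha,\beta\}$ such that $\alpha+\beta=\gamma+\gamma'$.
   Context: $R$ is the root system of a complex simple Lie algebra, with $(\cdot,\cdot)$ the invariant form induced by the Killing form; in the simply laced case all roots are long. *)

theory Defs
  imports "HOL-Analysis.Analysis"
begin

text \<open>A (crystallographic) root system in a Euclidean space, with the inner
  product of the space playing the role of the invariant form.\<close>
definition root_system :: "'a::euclidean_space set \<Rightarrow> bool" where
  "root_system R \<longleftrightarrow>
     finite R \<and> 0 \<notin> R \<and> span R = UNIV \<and>
     (\<forall>\<alpha>\<in>R. \<forall>\<beta>\<in>R. \<beta> - (2 * (\<beta> \<bullet> \<alpha>) / (\<alpha> \<bullet> \<alpha>)) *\<^sub>R \<alpha> \<in> R) \<and>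
     (\<forall>\<alpha>\<in>R. \<forall>\<beta>\<in>R. 2 * (\<beta> \<bullet> \<alpha>) / (\<alpha> \<bullet> \<alpha>) \<in> \<int>)"

definition reduced_root_system :: "'a::euclidean_space set \<Rightarrow> bool" where
  "reduced_root_system R \<longleftrightarrow> root_system R \<and>
     (\<forall>\<alpha>\<in>R. \<forall>c::real. c *\<^sub>R \<alpha> \<in> R \<longrightarrow> c = 1 \<or> c = -1)"

definition irreducible_root_system :: "'a::euclidean_space set \<Rightarrow> bool" where
  "irreducible_root_system R \<longleftrightarrow> root_system R \<and>
     \<not> (\<exists>R1 R2. R1 \<noteq> {} \<and> R2 \<noteq> {} \<and> R1 \<union> R2 = R \<and> R1 \<inter> R2 = {} \<and>
           (\<forall>a\<in>R1. \<forall>b\<in>R2. a \<bullet> b = 0))"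

definition simple_lie_root_system :: "'a::euclidean_space set \<Rightarrow> bool" where
  "simple_lie_root_system R \<longleftrightarrow> reduced_root_system R \<and> irreducible_root_system R"

definition long_root :: "'a::euclidean_space set \<Rightarrow> 'a \<Rightarrow> bool" where
  "long_root R \<beta> \<longleftrightarrow> \<beta> \<in> R \<and> (\<forall>\<alpha>\<in>R. \<alpha> \<bullet> \<alpha> \<le> \<beta> \<bullet> \<beta>)"

end

theory Submission
  imports Defs
begin

lemma rs_refl:
  assumes "root_system R" "a \<in> R" "b \<in> R"
  shows "b - (2 * (b \<bullet> a) / (a \<bullet> a)) *\<^sub>R a \<in> R"
  using assms unfolding root_system_def by blast

lemma rs_int:
  assumes "root_system R" "a \<in> R" "b \<in> R"
  shows "2 * (b \<bullet> a) / (a \<bullet> a) \<in> \<int>"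
  using assms unfolding root_system_def by blast

lemma rs_nz: "root_system R \<Longrightarrow> a \<in> R \<Longrightarrow> a \<bullet> a > 0"
  unfolding root_system_def by auto

lemma rs_neg: assumes "root_system R" "a \<in> R" shows "- a \<in> R"
proof -
  have "a - (2 * (a \<bullet> a) / (a \<bullet> a)) *\<^sub>R a \<in> R" using rs_refl[OF assms assms(2)] .
  moreover have "2 * (a \<bullet> a) / (a \<bullet> a) = 2" using rs_nz[OF assms] by simp
  moreover have "a - 2 *\<^sub>R a = - a" by (simp add: scaleR_2)
  ultimately show ?thesis by simp
qed

lemma par_eq:
  fixes x y :: "'a::euclidean_space"
  assumes "(x \<bullet> y)^2 = (x \<bullet> x) * (y \<bullet> y)" "y \<bullet> y > 0"
  shows "x = ((x \<bullet> y) / (y \<bullet> y)) *\<^sub>R y"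
proof -
  define t where "t = (x \<bullet> y) / (y \<bullet> y)"
  have "(x - t *\<^sub>R y) \<bullet> (x - t *\<^sub>R y) = x \<bullet> x - 2 * t * (x \<bullet> y) + t^2 * (y \<bullet> y)"
    by (simp add: inner_diff_left inner_diff_right inner_commute power2_eq_square algebra_simps)
  also have "\<dots> = x \<bullet> x - (x \<bullet> y)^2 / (y \<bullet> y)"
    using assms(2) by (simp add: t_def power2_eq_square field_simps)
  also have "\<dots> = 0" using assms by (simp add: field_simps)
  finally have "x - t *\<^sub>R y = 0" by simp
  thus ?thesis by (simp add: t_def)
qed

lemma diff_root:
  assumes red: "reduced_root_system R" and x: "x \<in> R" and y: "y \<in> R"
    and pos: "x \<bullet> y > 0" and ne: "x \<noteq> y"
  shows "x - y \<in> R"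
proof -
  have rs: "root_system R" using red reduced_root_system_def by blast
  have xx: "x \<bullet> x > 0" and yy: "y \<bullet> y > 0" using rs_nz[OF rs] x y by auto
  have cs: "(x \<bullet> y)^2 < (x \<bullet> x) * (y \<bullet> y)"
  proof (rule ccontr)
    assume "\<not> ?thesis"
    moreover have "(x \<bullet> y)^2 \<le> (x \<bullet> x) * (y \<bullet> y)"
    proof -
      have "\<bar>x \<bullet> y\<bar> \<le> norm x * norm y" by (rule Cauchy_Schwarz_ineq2)
      hence "\<bar>x \<bullet> y\<bar>^2 \<le> (norm x * norm y)^2"
        by (intro power_mono) auto
      thus ?thesis by (simp add: power_mult_distrib power2_norm_eq_inner)
    qed
    ultimately have eq: "(x \<bullet> y)^2 = (x \<bullet> x) * (y \<bullet> y)" by linarith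
    define t where "t = (x \<bullet> y) / (y \<bullet> y)"
    have xt: "x = t *\<^sub>R y" using par_eq[OF eq yy] by (simp add: t_def)
    have "t > 0" using pos yy by (simp add: t_def)
    moreover have "t = 1 \<or> t = -1" using red y x xt unfolding reduced_root_system_def by metis
    ultimately have "t = 1" by auto
    thus False using xt ne by simp
  qed
  define n1 where "n1 = 2 * (x \<bullet> y) / (y \<bullet> y)"
  define n2 where "n2 = 2 * (y \<bullet> x) / (x \<bullet> x)"
  have "n1 \<in> \<int>" using rs_int[OF rs y x] by (simp add: n1_def)
  then obtain k1 where k1: "n1 = of_int k1" by (auto elim: Ints_cases)
  have "n2 \<in> \<int>" using rs_int[OF rs x y] by (simp add: n2_def)
  then obtain k2 where k2: "n2 = of_int k2" by (auto elim: Ints_cases)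
  have "n1 > 0" "n2 > 0" using pos xx yy by (auto simp: n1_def n2_def inner_commute)
  hence p1: "k1 > 0" "k2 > 0" using k1 k2 by auto
  have "n1 * n2 = 4 * (x \<bullet> y)^2 / ((x \<bullet> x) * (y \<bullet> y))"
    by (simp add: n1_def n2_def inner_commute power2_eq_square)
  also have "\<dots> < 4" using cs xx yy by (simp add: field_simps)
  finally have "real_of_int (k1 * k2) < 4" using k1 k2 by simp
  hence "k1 * k2 < 4" by linarith
  hence "k1 = 1 \<or> k2 = 1"
  proof -
    assume a: "k1 * k2 < 4"
    { assume "k1 \<ge> 2" "k2 \<ge> 2"
      hence "k1 * k2 \<ge> 2 * 2" by (intro mult_mono) auto
      with a have False by simp }
    thus ?thesis using p1 by (smt (verit))
  qed
  thus ?thesis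
  proof
    assume "k1 = 1"
    hence "n1 = 1" using k1 by simp
    hence "2 * (x \<bullet> y) / (y \<bullet> y) = 1" unfolding n1_def .
    hence "x - (2 * (x \<bullet> y) / (y \<bullet> y)) *\<^sub>R y = x - y" by (simp only: scaleR_one)
    thus ?thesis using rs_refl[OF rs y x] by metis
  next
    assume "k2 = 1"
    hence "n2 = 1" using k2 by simp
    hence "2 * (y \<bullet> x) / (x \<bullet> x) = 1" unfolding n2_def .
    hence "y - (2 * (y \<bullet> x) / (x \<bullet> x)) *\<^sub>R x = y - x" by (simp only: scaleR_one)
    hence "y - x \<in> R" using rs_refl[OF rs x y] by metis
    from rs_neg[OF rs this] show ?thesis by simp
  qed
qed

lemma common_nonorth:
  assumes irr: "irreducible_root_system R" and a: "\<alpha> \<in> R" and b: "\<beta> \<in> R"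
  shows "\<exists>y\<in>R. y \<bullet> \<alpha> \<noteq> 0 \<and> y \<bullet> \<beta> \<noteq> 0"
proof -
  have rs: "root_system R" using irr irreducible_root_system_def by blast
  define R1 where "R1 = {x\<in>R. \<exists>y\<in>R. y \<bullet> \<alpha> \<noteq> 0 \<and> y \<bullet> x \<noteq> 0}"
  define R2 where "R2 = R - R1"
  have step: "b \<in> R1" if aR: "u \<in> R1" and bR: "b \<in> R" and ab: "u \<bullet> b \<noteq> 0" for u b
  proof -
    from aR obtain y where y: "y \<in> R" "y \<bullet> \<alpha> \<noteq> 0" "y \<bullet> u \<noteq> 0" and uR: "u \<in> R"
      by (auto simp: R1_def)
    show ?thesis
    proof (cases "y \<bullet> b \<noteq> 0")
      case True thus ?thesis using y bR by (auto simp: R1_def)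
    next
      case yb: False
      show ?thesis
      proof (cases "u \<bullet> \<alpha> \<noteq> 0")
        case True thus ?thesis using uR bR ab by (auto simp: R1_def)
      next
        case ua: False
        define c where "c = 2 * (y \<bullet> u) / (u \<bullet> u)"
        define z where "z = y - c *\<^sub>R u"
        have zR: "z \<in> R" using rs_refl[OF rs uR y(1)] by (simp add: z_def c_def)
        have uu: "u \<bullet> u > 0" using rs_nz[OF rs uR] .
        have c0: "c \<noteq> 0" using y(3) uu by (simp add: c_def)
        have "z \<bullet> \<alpha> = y \<bullet> \<alpha>" using ua by (simp add: z_def inner_diff_left)
        moreover have "z \<bullet> b = - c * (u \<bullet> b)" using yb by (simp add: z_def inner_diff_left)
        ultimately have "z \<bullet> \<alpha> \<noteq> 0 \<and> z \<bullet> b \<noteq> 0" using y(2) c0 ab by auto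
        thus ?thesis using zR bR unfolding R1_def by blast
      qed
    qed
  qed
  have "\<alpha> \<bullet> \<alpha> \<noteq> 0" using rs_nz[OF rs a] by simp
  hence "\<alpha> \<in> R1" using a unfolding R1_def by blast
  have "R2 = {}"
  proof (rule ccontr)
    assume ne: "R2 \<noteq> {}"
    have "R1 \<noteq> {}" using \<open>\<alpha> \<in> R1\<close> by auto
    moreover have "R1 \<union> R2 = R" "R1 \<inter> R2 = {}" by (auto simp: R2_def R1_def)
    moreover have "\<forall>u\<in>R1. \<forall>v\<in>R2. u \<bullet> v = 0" using step by (auto simp: R2_def)
    ultimately show False using irr ne unfolding irreducible_root_system_def by blast
  qed
  hence "\<beta> \<in> R1" using b by (auto simp: R2_def)
  thus ?thesis by (auto simp: R1_def)
qed

theorem lemma2p5: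
  fixes R :: "'a::euclidean_space set" and \<alpha> \<beta> :: 'a
  assumes "simple_lie_root_system R"
    and "\<alpha> \<in> R" and "\<beta> \<in> R" and "long_root R \<beta>"
    and "\<alpha> \<bullet> \<beta> = 0"
  shows "\<exists>\<gamma>\<in>R. \<exists>\<gamma>'\<in>R. \<gamma> \<notin> {\<alpha>, \<beta>} \<and> \<alpha> + \<beta> = \<gamma> + \<gamma>'"
proof -
  have red: "reduced_root_system R" and irr: "irreducible_root_system R"
    using assms(1) simple_lie_root_system_def by auto
  have rs: "root_system R" using red reduced_root_system_def by blast
  note ab = assms(5)
  have ba: "\<beta> \<bullet> \<alpha> = 0" using ab by (simp add: inner_commute)
  obtain y where y: "y \<in> R" "y \<bullet> \<alpha> \<noteq> 0" "y \<bullet> \<beta> \<noteq> 0"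
    using common_nonorth[OF irr assms(2,3)] by blast
  obtain e where e: "e \<in> R" "e \<bullet> \<alpha> > 0" "e \<bullet> \<beta> \<noteq> 0"
  proof (cases "y \<bullet> \<alpha> > 0")
    case True thus ?thesis using that y by blast
  next
    case False
    hence "(-y) \<bullet> \<alpha> > 0" using y(2) by simp
    thus ?thesis using that rs_neg[OF rs y(1)] y(3) by auto
  qed
  have bb: "\<beta> \<bullet> \<beta> > 0" using rs_nz[OF rs assms(3)] .
  obtain d where d: "d \<in> R" "d \<bullet> \<alpha> > 0" "d \<bullet> \<beta> < 0"
  proof (cases "e \<bullet> \<beta> < 0")
    case True thus ?thesis using that e by blast
  next
    case False
    hence eb: "e \<bullet> \<beta> > 0" using e(3) by simp
    define d where "d = e - (2 * (e \<bullet> \<beta>) / (\<beta> \<bullet> \<beta>)) *\<^sub>R \<beta>"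
    have "d \<in> R" using rs_refl[OF rs assms(3) e(1)] by (simp add: d_def)
    moreover have "d \<bullet> \<alpha> = e \<bullet> \<alpha>" using ba by (simp add: d_def inner_diff_left)
    moreover have "d \<bullet> \<beta> = - (e \<bullet> \<beta>)" using bb by (simp add: d_def inner_diff_left)
    ultimately show ?thesis using that e eb by auto
  qed
  have g1: "\<alpha> - d \<in> R"
    apply (rule diff_root[OF red assms(2) d(1)])
    using d ba by (auto simp: inner_commute)
  have g2: "\<beta> - (-d) \<in> R"
    apply (rule diff_root[OF red assms(3) rs_neg[OF rs d(1)]])
    using d ab by (auto simp: inner_commute)
  have "\<alpha> - d \<noteq> \<alpha>" using rs_nz[OF rs d(1)] by auto
  moreover have "\<alpha> - d \<noteq> \<beta>"
  proof
    assume "\<alpha> - d = \<beta>"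
    hence dd: "d = \<alpha> - \<beta>" by (simp add: algebra_simps)
    have "d \<bullet> d = \<alpha> \<bullet> \<alpha> + \<beta> \<bullet> \<beta>"
      using ab ba by (simp add: dd inner_diff_left inner_diff_right)
    moreover have "d \<bullet> d \<le> \<beta> \<bullet> \<beta>" using assms(4) d(1) unfolding long_root_def by blast
    ultimately show False using rs_nz[OF rs assms(2)] by simp
  qed
  moreover have "\<alpha> + \<beta> = (\<alpha> - d) + (\<beta> - (-d))" by simp
  ultimately show ?thesis using g1 g2 by blast
qed

end
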